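(* In the binary noisy-label setting described in the context, for every classifier $h$ and every function $g:\{-1,+1\}^2\to\mathrm{dom}(f^* )$, $$\widetilde{d}_f(h,g)=(1-e_+-e_-)\,d_f(h,g)+\mathrm{Bias}_f(h,g).$$
   Context: $(X,Y)$ is a random pair with features $X\in\mathcal X$ and clean label $Y\in\{-1,+1\}$. A noisy label $\tilde Y\in\{-1,+1\}$ is generated from $Y$, conditionally independently of $X$ given $Y$, with noise rates $e_+={\mathbb P}(\tilde Y=-1\mid Y=+1)$, $e_-={\mathbb P}(\tilde Y=+1\mid Y=-1)$, $e_++e_-<1$. A classifier is a measurable map $h:\mathcal X\to\{-1,+1\}$. $P=P_{h\times Y}$ is the joint law of $(h(X),Y)$ on $\{-1,+1\}^2$ and $Q=Q_{h\times Y}$ the product of its marginals ${\mathbb P}(h(X)=y){\mathbb P}(Y=y')$; $\tilde P,\tilde Q$ are defined identically with $\tilde Y$ in place of $Y$. $f$ is convex with $f(1)=0$ and $f^*(u)=\sup_v\{uv-f(v)\}$ is its Fenchel conjugate with domain $\mathrm{dom}(f^* )$. Define $d_f(h,g)=\mathbb E_{Z\sim P}[g(Z)]-\mathbb E_{Z\sim Q}[f^*(g(Z))]$ and $\widetilde d_f(h,g)=\mathbb E_{Z\sim \tilde P}[g(Z)]-\mathbb E_{Z\sim \tilde Q}[f^*(g(Z))]$. For $y\in\{-1,+1\}$, $\Delta^y_f(h,g)=\mathbb E_X[g(h(X),y)]-\mathbb E_X[f^*(g(h(X),y))]$, and $\mathrm{Bias}_f(h,g)=e_+\Delta^{-1}_f(h,g)+e_-\Delta^{+1}_f(h,g)$.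 *)

theory Defs
  imports "HOL-Probability.Probability"
begin

definition labels :: "int set" where
  "labels = {-1, 1}"

definition convex_ext :: "(real \<Rightarrow> ereal) \<Rightarrow> bool" where
  "convex_ext f \<longleftrightarrow> (\<forall>x y t. 0 \<le> t \<and> t \<le> 1 \<longrightarrow>
      f (t * x + (1 - t) * y) \<le> ereal t * f x + ereal (1 - t) * f y)"

definition fconj :: "(real \<Rightarrow> ereal) \<Rightarrow> real \<Rightarrow> ereal" where
  "fconj f u = (SUP v. ereal (u * v) - f v)"

definition fdom :: "(real \<Rightarrow> ereal) \<Rightarrow> real set" where
  "fdom f = {u. fconj f u < \<infinity>}"

definition joint_law :: "'a measure \<Rightarrow> ('a \<Rightarrow> int) \<Rightarrow> ('a \<Rightarrow> int) \<Rightarrow> int \<times> int \<Rightarrow> real" where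
  "joint_law M U V = (\<lambda>(a, y). measure M {\<omega> \<in> space M. U \<omega> = a \<and> V \<omega> = y})"

definition prod_law :: "'a measure \<Rightarrow> ('a \<Rightarrow> int) \<Rightarrow> ('a \<Rightarrow> int) \<Rightarrow> int \<times> int \<Rightarrow> real" where
  "prod_law M U V = (\<lambda>(a, y). measure M {\<omega> \<in> space M. U \<omega> = a} * measure M {\<omega> \<in> space M. V \<omega> = y})"

definition lexp :: "(int \<times> int \<Rightarrow> real) \<Rightarrow> (int \<times> int \<Rightarrow> real) \<Rightarrow> real" where
  "lexp L \<phi> = (\<Sum>z\<in>labels \<times> labels. L z * \<phi> z)"

text \<open>d_f(h,g) with the label variable V (V = Y gives d_f, V = noisy Y gives tilde d_f).\<close>
definition dvar :: "'a measure \<Rightarrow> ('a \<Rightarrow> 'x) \<Rightarrow> ('a \<Rightarrow> int) \<Rightarrow> ('x \<Rightarrow> int)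
    \<Rightarrow> (real \<Rightarrow> ereal) \<Rightarrow> (int \<times> int \<Rightarrow> real) \<Rightarrow> real" where
  "dvar M X V h f g =
     lexp (joint_law M (\<lambda>\<omega>. h (X \<omega>)) V) g
     - lexp (prod_law M (\<lambda>\<omega>. h (X \<omega>)) V) (\<lambda>z. real_of_ereal (fconj f (g z)))"

definition Delta :: "'a measure \<Rightarrow> ('a \<Rightarrow> 'x) \<Rightarrow> ('x \<Rightarrow> int)
    \<Rightarrow> (real \<Rightarrow> ereal) \<Rightarrow> (int \<times> int \<Rightarrow> real) \<Rightarrow> int \<Rightarrow> real" where
  "Delta M X h f g y =
     (\<integral>\<omega>. g (h (X \<omega>), y) \<partial>M) - (\<integral>\<omega>. real_of_ereal (fconj f (g (h (X \<omega>), y))) \<partial>M)"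

definition Bias :: "real \<Rightarrow> real \<Rightarrow> 'a measure \<Rightarrow> ('a \<Rightarrow> 'x) \<Rightarrow> ('x \<Rightarrow> int)
    \<Rightarrow> (real \<Rightarrow> ereal) \<Rightarrow> (int \<times> int \<Rightarrow> real) \<Rightarrow> real" where
  "Bias ep em M X h f g = ep * Delta M X h f g (-1) + em * Delta M X h f g 1"

end

theory Submission
  imports Defs
begin

lemma cond_scale:
  fixes K J P c :: real
  assumes "K * P = J * (c * P)" "0 \<le> K" "K \<le> J" "J \<le> P"
  shows "K = c * J"
proof (cases "P = 0")
  case True
  then have "J = 0" "K = 0" using assms by linarith+
  then show ?thesis by simp
next
  case False
  then have "K = J * c" using assms(1) by (metis mult.assoc mult.commute mult_right_cancel)
  then show ?thesis by simp
qed

lemma int_two: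
  fixes M :: "'a measure" and H :: "'a \<Rightarrow> int" and \<phi> :: "int \<Rightarrow> real"
  assumes "prob_space M" "H \<in> M \<rightarrow>\<^sub>M count_space UNIV" "\<forall>\<omega>\<in>space M. H \<omega> \<in> labels"
  shows "(\<integral>\<omega>. \<phi> (H \<omega>) \<partial>M) = \<phi> 1 * measure M {\<omega>\<in>space M. H \<omega> = 1}
          + \<phi> (-1) * measure M {\<omega>\<in>space M. H \<omega> = -1}"
proof -
  interpret prob_space M by fact
  note [measurable] = assms(2)
  define A1 where "A1 = {\<omega>\<in>space M. H \<omega> = 1}"
  define A2 where "A2 = {\<omega>\<in>space M. H \<omega> = -1}"
  have s1: "A1 \<in> sets M" unfolding A1_def by measurable
  have s2: "A2 \<in> sets M" unfolding A2_def by measurable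
  have "(\<integral>\<omega>. \<phi> (H \<omega>) \<partial>M) = (\<integral>\<omega>. \<phi> 1 * indicator A1 \<omega> + \<phi> (-1) * indicator A2 \<omega> \<partial>M)"
    apply (rule Bochner_Integration.integral_cong, simp)
    using assms(3) by (auto simp: labels_def A1_def A2_def indicator_def)
  also have "\<dots> = \<phi> 1 * measure M A1 + \<phi> (-1) * measure M A2"
    using s1 s2 by (subst Bochner_Integration.integral_add)
      (auto intro!: integrable_mult_right integrable_real_indicator simp: emeasure_eq_measure)
  finally show ?thesis unfolding A1_def A2_def .
qed

theorem theorem3:
  fixes M :: "'a measure" and SX :: "'x measure"
    and X :: "'a \<Rightarrow> 'x" and Y Yt :: "'a \<Rightarrow> int"
    and ep em :: real and f :: "real \<Rightarrow> ereal"
    and h :: "'x \<Rightarrow> int" and g :: "int \<times> int \<Rightarrow> real"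
  assumes "prob_space M"
    and "X \<in> M \<rightarrow>\<^sub>M SX"
    and "Y \<in> M \<rightarrow>\<^sub>M count_space UNIV"
    and "Yt \<in> M \<rightarrow>\<^sub>M count_space UNIV"
    and "\<forall>\<omega>\<in>space M. Y \<omega> \<in> labels"
    and "\<forall>\<omega>\<in>space M. Yt \<omega> \<in> labels"
    \<comment> \<open>noise rates e+ = P(Yt=-1 | Y=+1), e- = P(Yt=+1 | Y=-1)\<close>
    and "measure M {\<omega>\<in>space M. Y \<omega> = 1 \<and> Yt \<omega> = -1} = ep * measure M {\<omega>\<in>space M. Y \<omega> = 1}"
    and "measure M {\<omega>\<in>space M. Y \<omega> = -1 \<and> Yt \<omega> = 1} = em * measure M {\<omega>\<in>space M. Y \<omega> = -1}"
    and "0 \<le> ep" and "0 \<le> em" and "ep + em < 1"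
    \<comment> \<open>Yt conditionally independent of X given Y\<close>
    and "\<forall>A\<in>sets SX. \<forall>y yt.
           measure M {\<omega>\<in>space M. X \<omega> \<in> A \<and> Y \<omega> = y \<and> Yt \<omega> = yt} * measure M {\<omega>\<in>space M. Y \<omega> = y}
         = measure M {\<omega>\<in>space M. X \<omega> \<in> A \<and> Y \<omega> = y} * measure M {\<omega>\<in>space M. Y \<omega> = y \<and> Yt \<omega> = yt}"
    and "convex_ext f" and "\<forall>x. f x \<noteq> -\<infinity>" and "f 1 = 0"
    and "h \<in> SX \<rightarrow>\<^sub>M count_space UNIV"
    and "\<forall>x\<in>space SX. h x \<in> labels"
    and "\<forall>z\<in>labels \<times> labels. g z \<in> fdom f"
  shows "dvar M X Yt h f g = (1 - ep - em) * dvar M X Y h f g + Bias ep em M X h f g"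
proof -
  interpret prob_space M by fact
  note [measurable] = assms(2,3,4,16)
  define H where "H = (\<lambda>\<omega>. h (X \<omega>))"
  have Hm[measurable]: "H \<in> M \<rightarrow>\<^sub>M count_space UNIV" unfolding H_def by measurable
  have Xs: "\<And>\<omega>. \<omega> \<in> space M \<Longrightarrow> X \<omega> \<in> space SX"
    using measurable_space[OF assms(2)] by simp
  have Hl: "\<forall>\<omega>\<in>space M. H \<omega> \<in> labels"
    using assms(17) Xs unfolding H_def by simp
  define K where "K = (\<lambda>a y yt. measure M {\<omega>\<in>space M. H \<omega> = a \<and> Y \<omega> = y \<and> Yt \<omega> = yt})"
  define J where "J = (\<lambda>a y. measure M {\<omega>\<in>space M. H \<omega> = a \<and> Y \<omega> = y})"
  define Jt where "Jt = (\<lambda>a yt. measure M {\<omega>\<in>space M. H \<omega> = a \<and> Yt \<omega> = yt})"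
  define pH where "pH = (\<lambda>a. measure M {\<omega>\<in>space M. H \<omega> = a})"
  define pY where "pY = (\<lambda>y. measure M {\<omega>\<in>space M. Y \<omega> = y})"
  define pYt where "pYt = (\<lambda>y. measure M {\<omega>\<in>space M. Yt \<omega> = y})"
  define Q where "Q = (\<lambda>y yt. measure M {\<omega>\<in>space M. Y \<omega> = y \<and> Yt \<omega> = yt})"
  have ci: "K a y yt * pY y = J a y * Q y yt" for a y yt
  proof -
    have A: "h -` {a} \<inter> space SX \<in> sets SX" by measurable
    have e1: "{\<omega>\<in>space M. X \<omega> \<in> h -` {a} \<inter> space SX \<and> Y \<omega> = y \<and> Yt \<omega> = yt}
       = {\<omega>\<in>space M. H \<omega> = a \<and> Y \<omega> = y \<and> Yt \<omega> = yt}"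
      using Xs unfolding H_def by auto
    have e2: "{\<omega>\<in>space M. X \<omega> \<in> h -` {a} \<inter> space SX \<and> Y \<omega> = y}
       = {\<omega>\<in>space M. H \<omega> = a \<and> Y \<omega> = y}"
      using Xs unfolding H_def by auto
    have c: "measure M {\<omega>\<in>space M. X \<omega> \<in> h -` {a} \<inter> space SX \<and> Y \<omega> = y \<and> Yt \<omega> = yt} * pY y
         = measure M {\<omega>\<in>space M. X \<omega> \<in> h -` {a} \<inter> space SX \<and> Y \<omega> = y} * Q y yt"
      using bspec[OF assms(12) A, rule_format, of y yt] unfolding pY_def Q_def .
    show ?thesis using c unfolding K_def J_def e1 e2 .
  qed
  have split2: "measure M {\<omega>\<in>space M. P \<omega>} = measure M {\<omega>\<in>space M. P \<omega> \<and> V \<omega> = 1}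
      + measure M {\<omega>\<in>space M. P \<omega> \<and> V \<omega> = -1}"
    if [measurable]: "Measurable.pred M P" "V \<in> M \<rightarrow>\<^sub>M count_space UNIV"
       and Vl: "\<forall>\<omega>\<in>space M. V \<omega> \<in> labels" for P and V :: "'a \<Rightarrow> int"
  proof -
    have "{\<omega>\<in>space M. P \<omega>} = {\<omega>\<in>space M. P \<omega> \<and> V \<omega> = 1} \<union> {\<omega>\<in>space M. P \<omega> \<and> V \<omega> = -1}"
      using Vl by (auto simp: labels_def)
    moreover have "measure M ({\<omega>\<in>space M. P \<omega> \<and> V \<omega> = 1} \<union> {\<omega>\<in>space M. P \<omega> \<and> V \<omega> = -1})
       = measure M {\<omega>\<in>space M. P \<omega> \<and> V \<omega> = 1} + measure M {\<omega>\<in>space M. P \<omega> \<and> V \<omega> = -1}"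
      by (rule finite_measure_Union) (measurable, auto)
    ultimately show ?thesis by simp
  qed
  have Q11: "Q 1 1 = (1 - ep) * pY 1"
    using split2[of "\<lambda>\<omega>. Y \<omega> = 1" Yt] assms(4,6,7) unfolding Q_def pY_def
    by (simp add: algebra_simps)
  have Q10: "Q 1 (-1) = ep * pY 1" using assms(7) unfolding Q_def pY_def by simp
  have Q00: "Q (-1) (-1) = (1 - em) * pY (-1)"
    using split2[of "\<lambda>\<omega>. Y \<omega> = -1" Yt] assms(4,6,8) unfolding Q_def pY_def
    by (simp add: algebra_simps)
  have Q01: "Q (-1) 1 = em * pY (-1)" using assms(8) unfolding Q_def pY_def by simp
  have KJ: "0 \<le> K a y yt \<and> K a y yt \<le> J a y \<and> J a y \<le> pY y" for a y yt
    unfolding K_def J_def pY_def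
    by (auto intro!: finite_measure_mono)
  have K11: "K a 1 1 = (1 - ep) * J a 1" for a
    by (rule cond_scale[of _ "pY 1"]) (use ci[of a 1 1] Q11 KJ[of a 1 1] in auto)
  have K10: "K a 1 (-1) = ep * J a 1" for a
    by (rule cond_scale[of _ "pY 1"]) (use ci[of a 1 "-1"] Q10 KJ[of a 1 "-1"] in auto)
  have K00: "K a (-1) (-1) = (1 - em) * J a (-1)" for a
    by (rule cond_scale[of _ "pY (-1)"]) (use ci[of a "-1" "-1"] Q00 KJ[of a "-1" "-1"] in auto)
  have K01: "K a (-1) 1 = em * J a (-1)" for a
    by (rule cond_scale[of _ "pY (-1)"]) (use ci[of a "-1" 1] Q01 KJ[of a "-1" 1] in auto)
  have Jt1: "Jt a yt = K a 1 yt + K a (-1) yt" for a yt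
    using split2[of "\<lambda>\<omega>. H \<omega> = a \<and> Yt \<omega> = yt" Y] assms(3,5) unfolding Jt_def K_def
    by (simp add: conj_ac)
  have pHJ: "pH a = J a 1 + J a (-1)" for a
    using split2[of "\<lambda>\<omega>. H \<omega> = a" Y] assms(3,5) unfolding pH_def J_def by simp
  have pYt1: "pYt yt = Q 1 yt + Q (-1) yt" for yt
    using split2[of "\<lambda>\<omega>. Yt \<omega> = yt" Y] assms(3,5) unfolding pYt_def Q_def
    by (simp add: conj_ac)
  have pYsum: "pY 1 + pY (-1) = 1"
    using split2[of "\<lambda>\<omega>. True" Y] assms(3,5) prob_space unfolding pY_def by simp
  have I: "(\<integral>\<omega>. \<phi> (H \<omega>) \<partial>M) = \<phi> 1 * pH 1 + \<phi> (-1) * pH (-1)" for \<phi> :: "int \<Rightarrow> real"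
    using int_two[OF assms(1) Hm Hl] unfolding pH_def by simp
  have lab: "labels \<times> labels = {(-1,-1),(-1,1),(1,-1),(1,1)}" by (auto simp: labels_def)
  define F where "F = (\<lambda>z. real_of_ereal (fconj f (g z)))"
  have D: "Delta M X h f g y = (g (1,y) * pH 1 + g (-1,y) * pH (-1)) - (F (1,y) * pH 1 + F (-1,y) * pH (-1))" for y
    unfolding Delta_def using I[of "\<lambda>a. g (a,y)"] I[of "\<lambda>a. F (a,y)"] unfolding H_def F_def by simp
  have eJt: "measure M {\<omega>\<in>space M. h (X \<omega>) = a \<and> Yt \<omega> = yt} = Jt a yt" for a yt
    unfolding Jt_def H_def ..
  have eJ: "measure M {\<omega>\<in>space M. h (X \<omega>) = a \<and> Y \<omega> = yt} = J a yt" for a yt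
    unfolding J_def H_def ..
  have epH: "measure M {\<omega>\<in>space M. h (X \<omega>) = a} = pH a" for a
    unfolding pH_def H_def ..
  have epY: "measure M {\<omega>\<in>space M. Y \<omega> = a} = pY a" for a
    unfolding pY_def ..
  have epYt: "measure M {\<omega>\<in>space M. Yt \<omega> = a} = pYt a" for a
    unfolding pYt_def ..
  have eF: "real_of_ereal (fconj f (g z)) = F z" for z unfolding F_def ..
  have pY0: "pY (-1) = 1 - pY 1" using pYsum by simp
  show ?thesis
    unfolding dvar_def Bias_def D lexp_def lab
    apply (simp only: joint_law_def prod_law_def eJt eJ epH epY epYt eF split sum.insert_if
       finite.emptyI finite_insert insert_iff empty_iff prod.inject sum.empty)
    apply (simp add: Jt1 pYt1 K11 K10 K00 K01 Q11 Q10 Q00 Q01 pHJ pY0)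
    apply (simp add: algebra_simps)
    done
qed

end
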